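(* Let $n>30$ with $n\equiv 0\pmod 6$, and let $\mathcal{H}$ and $\Pi$ be as defined in the context. If $H,H'\in\mathcal{H}$ with $H\neq H'$, then $\Pi\cap H\cap H'=\emptyset$; that is, the subgroups in $\mathcal{H}$ partition $\Pi$.
   Context: $S_n$ is the symmetric group on $\{1,\dots,n\}$, $n\equiv 0\pmod 6$. Subgroup classes: $\mathcal{H}_{-1}$ is the set of stabilizers in $S_n$ of partitions of $\{1,\dots,n\}$ into two blocks of size $n/2$ (a stabilizer may swap the two blocks); $\mathcal{H}_0=\{A_n\}$; for $1\le i\le n/3-1$, $\mathcal{H}_i$ is the set of setwise stabilizers in $S_n$ of $i$-element subsets of $\{1,\dots,n\}$; $\mathcal{H}=\bigcup_{i=-1}^{n/3-1}\mathcal{H}_i$. Permutation classes (cycle lengths listed, all of which together account for all $n$ points): $\Pi_{-1}$ is the set of $n$-cycles; $\Pi_0$ is the set of products of two disjoint cycles of lengths $n/2-1$ and $n/2+1$ if $n/2$ is even, respectively $n/2-2$ and $n/2+2$ if $n/2$ is odd; $\Pi_1$ is the set of elements with exactly one fixed point and two further cycles of lengths $n/2-2$ and $n/2+1$; for odd $i$ with $3\le i\le n/3-1$, $\Pi_i$ is the set of products of three disjoint cycles of lengths $i$, $(n-i-1)/2$, $(n-i+1)/2$; for even $i$ with $2\le i\le n/3-1$ and $(n-i)/2$ odd, $\Pi_i$ consists of products of three disjoint cycles of lengths $i,(n-i)/2,(n-i)/2$; for even $i$ with $4\le i\le n/3-1$ and $(n-i)/2$ even, $\Pi_i$ consists of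 products of three disjoint cycles of lengths $i,(n-i)/2-1,(n-i)/2+1$; if $(n-2)/2$ is even, $\Pi_2$ consists of products of three disjoint cycles of lengths $2, n/2-4, n/2+2$. Finally $\Pi=\bigcup_{i=-1}^{n/3-1}\Pi_i$. *)

theory Defs
  imports "HOL-Combinatorics.Permutations" "HOL-Library.Multiset"
begin

definition Sym :: "nat \<Rightarrow> (nat \<Rightarrow> nat) set" where
  "Sym n = {p. p permutes {1..n}}"

definition Alt :: "nat \<Rightarrow> (nat \<Rightarrow> nat) set" where
  "Alt n = {p. p permutes {1..n} \<and> evenperm p}"

definition cyc :: "(nat \<Rightarrow> nat) \<Rightarrow> nat \<Rightarrow> nat set" where
  "cyc p x = {(p ^^ k) x | k. True}"

text \<open>Cycle type: multiset of the lengths of all cycles of p on {1..n},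
  fixed points counted as cycles of length 1.\<close>
definition cycle_type :: "nat \<Rightarrow> (nat \<Rightarrow> nat) \<Rightarrow> nat multiset" where
  "cycle_type n p = image_mset card (mset_set (cyc p ` {1..n}))"

definition Hm1 :: "nat \<Rightarrow> (nat \<Rightarrow> nat) set set" where
  "Hm1 n = {{p \<in> Sym n. (p ` A = A \<and> p ` B = B) \<or> (p ` A = B \<and> p ` B = A)} | A B.
              A \<union> B = {1..n} \<and> A \<inter> B = {} \<and> card A = n div 2 \<and> card B = n div 2}"

definition Hpos :: "nat \<Rightarrow> nat \<Rightarrow> (nat \<Rightarrow> nat) set set" where
  "Hpos n i = {{p \<in> Sym n. p ` S = S} | S. S \<subseteq> {1..n} \<and> card S = i}"

definition HH :: "nat \<Rightarrow> (nat \<Rightarrow> nat) set set" where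
  "HH n = Hm1 n \<union> {Alt n} \<union> (\<Union>i\<in>{1..n div 3 - 1}. Hpos n i)"

definition Pm1 :: "nat \<Rightarrow> (nat \<Rightarrow> nat) set" where
  "Pm1 n = {p \<in> Sym n. cycle_type n p = {#n#}}"

definition P0 :: "nat \<Rightarrow> (nat \<Rightarrow> nat) set" where
  "P0 n = {p \<in> Sym n. cycle_type n p =
     (if even (n div 2) then {#n div 2 - 1, n div 2 + 1#} else {#n div 2 - 2, n div 2 + 2#})}"

definition P1 :: "nat \<Rightarrow> (nat \<Rightarrow> nat) set" where
  "P1 n = {p \<in> Sym n. cycle_type n p = {#1, n div 2 - 2, n div 2 + 1#}}"

definition Pi_i :: "nat \<Rightarrow> nat \<Rightarrow> (nat \<Rightarrow> nat) set" where
  "Pi_i n i = {p \<in> Sym n.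
     (odd i \<and> 3 \<le> i \<and> cycle_type n p = {#i, (n - i - 1) div 2, (n - i + 1) div 2#})
   \<or> (even i \<and> 2 \<le> i \<and> odd ((n - i) div 2) \<and>
        cycle_type n p = {#i, (n - i) div 2, (n - i) div 2#})
   \<or> (even i \<and> 4 \<le> i \<and> even ((n - i) div 2) \<and>
        cycle_type n p = {#i, (n - i) div 2 - 1, (n - i) div 2 + 1#})
   \<or> (i = 2 \<and> even ((n - 2) div 2) \<and> cycle_type n p = {#2, n div 2 - 4, n div 2 + 2#})}"

definition PP :: "nat \<Rightarrow> (nat \<Rightarrow> nat) set" where
  "PP n = Pm1 n \<union> P0 n \<union> P1 n \<union> (\<Union>i\<in>{2..n div 3 - 1}. Pi_i n i)"

end

theory Submission
  imports Defs "HOL-Combinatorics.Cycles"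
begin


lemma cyc_eq_range: "cyc p x = range (\<lambda>k. (p^^k) x)" by (auto simp: cyc_def)

lemma cyc_self: "x \<in> cyc p x"
  unfolding cyc_def by (auto intro: exI[of _ 0])

lemma cyc_app: "p x \<in> cyc p x"
  unfolding cyc_def by (auto intro: exI[of _ 1])

lemma cyc_trans: "y \<in> cyc p x \<Longrightarrow> cyc p y \<subseteq> cyc p x"
  unfolding cyc_def by (auto simp: funpow_add[symmetric, THEN fun_cong, simplified comp_def] intro: exI)

lemma cyc_sym:
  assumes "permutation p" "y \<in> cyc p x" shows "x \<in> cyc p y"
proof -
  obtain k where y: "y = (p^^k) x" using assms(2) by (auto simp: cyc_def)
  obtain m where m: "p ^^ m = id" "m > 0" using permutation_is_nilpotent[OF assms(1)] by blast
  have pm: "p ^^ (m*k) = id" using m(1) by (induct k) (auto simp: funpow_add funpow_mult)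
  have "k \<le> m*k" using m(2) by simp
  hence "(p^^(m*k - k)) y = (p^^(m*k)) x"
    by (simp add: y funpow_add[symmetric, THEN fun_cong, simplified comp_def])
  also have "\<dots> = x" using pm by simp
  finally show ?thesis unfolding cyc_def by blast
qed

lemma cyc_eq: "permutation p \<Longrightarrow> y \<in> cyc p x \<Longrightarrow> cyc p y = cyc p x"
  using cyc_trans cyc_sym by (metis subset_antisym)

lemma cyc_closed:
  assumes "\<And>z. z \<in> S \<Longrightarrow> p z \<in> S" "x \<in> S" shows "cyc p x \<subseteq> S"
proof -
  have "(p^^k) x \<in> S" for k by (induct k) (use assms in auto)
  thus ?thesis by (auto simp: cyc_def)
qed

lemma evenperm_cycle_of_list:
  "distinct cs \<Longrightarrow> cs \<noteq> [] \<Longrightarrow> evenperm (cycle_of_list cs) \<longleftrightarrow> odd (length cs)"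
proof (induct cs rule: cycle_of_list.induct)
  case (1 i j cs)
  have "evenperm (cycle_of_list (i # j # cs)) \<longleftrightarrow> (evenperm (transpose i j) \<longleftrightarrow> evenperm (cycle_of_list (j#cs)))"
    by (simp add: evenperm_comp permutation_swap_id permutation_of_cycle)
  moreover have "evenperm (cycle_of_list (j#cs)) \<longleftrightarrow> odd (length (j#cs))" using 1 by auto
  moreover have "i \<noteq> j" using 1(2) by auto
  ultimately show ?case by (simp only: evenperm_swap length_Cons even_Suc) simp
qed auto

lemma evenperm_cyc:
  assumes "finite S" "p permutes S"
  shows "evenperm p \<longleftrightarrow> even (\<Sum>C\<in>cyc p ` S. Suc (card C))"
  using assms
proof (induct "card S" arbitrary: S p rule: less_induct)
  case less
  show ?case
  proof (cases "S = {}")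
    case True
    then have "p = id" using less(3) by (simp add: permutes_empty)
    thus ?thesis using True by simp
  next
    case False
    then obtain s where s: "s \<in> S" by blast
    have perm: "permutation p" using less(2,3) permutation_permutes by blast
    define C where "C = cyc p s"
    define cs where "cs = support p s"
    have setcs: "set cs = C" unfolding cs_def C_def cyc_eq_range support_set[OF perm] ..
    have dist: "distinct cs" unfolding cs_def using cycle_of_permutation[OF perm] .
    have inS: "\<And>z. z \<in> S \<Longrightarrow> p z \<in> S" using permutes_in_image[OF less(3)] by simp
    have CS: "C \<subseteq> S" unfolding C_def using cyc_closed[OF inS s] .
    have pC: "p z \<notin> C" if "z \<in> S - C" for z
    proof
      assume "p z \<in> C"
      hence "cyc p (p z) = C" unfolding C_def by (rule cyc_eq[OF perm])
      moreover have "z \<in> cyc p (p z)" using cyc_sym[OF perm cyc_app] .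
      ultimately show False using that by blast
    qed
    define q where "q = (\<lambda>y. if y \<in> S - set cs then p y else y)"
    have qperm: "q permutes (S - C)"
      using semidecomposition[OF less(3,2), of s] unfolding q_def cs_def[symmetric] setcs .
    have decomp: "cycle_of_list cs \<circ> q = p"
    proof
      fix a
      consider "a \<in> S - C" | "a \<in> C" | "a \<notin> S" "a \<notin> C" by blast
      thus "(cycle_of_list cs \<circ> q) a = p a"
      proof cases
        case 1 thus ?thesis using pC[OF 1] by (simp add: q_def setcs id_outside_supp)
      next
        case 2 thus ?thesis using cycle_restrict[OF perm, of a s] setcs unfolding q_def cs_def by simp
      next
        case 3 thus ?thesis by (simp add: q_def setcs permutes_not_in[OF less(3) 3(1)] id_outside_supp)
      qed
    qed
    have sC: "s \<in> C" unfolding C_def by (rule cyc_self)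
    have lt: "card (S - C) < card S" by (rule psubset_card_mono) (use less(2) sC s in auto)
    have IH: "evenperm q \<longleftrightarrow> even (\<Sum>D\<in>cyc q ` (S - C). Suc (card D))"
      using less(1)[OF lt finite_Diff[OF less(2)] qperm] .
    have agree: "cyc q y = cyc p y" if y: "y \<in> S - C" for y
    proof -
      have "(q^^k) y = (p^^k) y \<and> (p^^k) y \<in> S - C" for k
      proof (induct k)
        case (Suc k)
        then have h: "(q^^k) y = (p^^k) y" "(p^^k) y \<in> S - C" by auto
        have "(q^^Suc k) y = p ((p^^k) y)" using h by (simp add: q_def setcs)
        moreover have "p ((p^^k) y) \<in> S - C" using pC[OF h(2)] inS h(2) by blast
        ultimately show ?case by simp
      qed (use y in auto)
      thus ?thesis unfolding cyc_def by auto
    qed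
    have orb: "cyc q ` (S - C) = cyc p ` S - {C}"
    proof
      show "cyc q ` (S - C) \<subseteq> cyc p ` S - {C}"
      proof
        fix D assume "D \<in> cyc q ` (S - C)"
        then obtain y where y: "y \<in> S - C" "D = cyc q y" by blast
        have "D = cyc p y" using agree[OF y(1)] y(2) by simp
        moreover have "cyc p y \<noteq> C" using cyc_self[of y p] y(1) by blast
        ultimately show "D \<in> cyc p ` S - {C}" using y(1) by blast
      qed
    next
      show "cyc p ` S - {C} \<subseteq> cyc q ` (S - C)"
      proof
        fix D assume "D \<in> cyc p ` S - {C}"
        then obtain y where y: "y \<in> S" "D = cyc p y" "D \<noteq> C" by blast
        have "y \<notin> C" using y cyc_eq[OF perm, of y s] unfolding C_def by blast
        thus "D \<in> cyc q ` (S - C)" using agree[of y] y by blast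
      qed
    qed
    have Cin: "C \<in> cyc p ` S" using s C_def by blast
    have fin: "finite (cyc p ` S)" using less(2) by simp
    have sum: "(\<Sum>D\<in>cyc p ` S. Suc (card D)) = Suc (card C) + (\<Sum>D\<in>cyc q ` (S - C). Suc (card D))"
      unfolding orb using sum.remove[OF fin Cin, of "\<lambda>D. Suc (card D)"] by simp
    have pq: "permutation q" using qperm less(2) permutation_permutes by blast
    have "evenperm p \<longleftrightarrow> (evenperm (cycle_of_list cs) \<longleftrightarrow> evenperm q)"
      unfolding decomp[symmetric] by (rule evenperm_comp[OF permutation_of_cycle pq])
    moreover have "evenperm (cycle_of_list cs) \<longleftrightarrow> odd (card C)"
    proof -
      have "cs \<noteq> []" using sC setcs by auto
      thus ?thesis using evenperm_cycle_of_list[OF dist] distinct_card[OF dist] setcs by simp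
    qed
    ultimately show ?thesis using IH sum by auto
  qed
qed


lemma orbit_sub: "p permutes U \<Longrightarrow> C \<in> cyc p ` U \<Longrightarrow> C \<subseteq> U"
proof -
  assume p: "p permutes U" and C: "C \<in> cyc p ` U"
  have cl: "\<And>z. z \<in> U \<Longrightarrow> p z \<in> U" using permutes_in_image[OF p] by simp
  from C obtain x where "x \<in> U" "C = cyc p x" by auto
  thus ?thesis using cyc_closed[OF cl] by simp
qed

lemma orb_disj:
  assumes "permutation p" shows "pairwise disjnt (cyc p ` U)"
  unfolding pairwise_def disjnt_def
proof (intro ballI impI)
  fix C D assume C: "C \<in> cyc p ` U" and D: "D \<in> cyc p ` U" and ne: "C \<noteq> D"
  from C obtain x where x: "C = cyc p x" by auto
  from D obtain y where y: "D = cyc p y" by auto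
  show "C \<inter> D = {}"
  proof (rule ccontr)
    assume "C \<inter> D \<noteq> {}"
    then obtain z where z: "z \<in> cyc p x" "z \<in> cyc p y" using x y by auto
    have "cyc p z = cyc p x" by (rule cyc_eq[OF assms z(1)])
    moreover have "cyc p z = cyc p y" by (rule cyc_eq[OF assms z(2)])
    ultimately show False using ne x y by simp
  qed
qed

lemma inv_card:
  assumes U: "finite U" and p: "p permutes U" and S: "S \<subseteq> U" and pS: "p ` S = S"
  shows "S = \<Union>{C\<in>cyc p ` U. C \<subseteq> S}"
    and "card S = (\<Sum>C\<in>cyc p ` U. if C \<subseteq> S then card C else 0)"
proof -
  have perm: "permutation p" using U p permutation_permutes by blast
  have cl: "\<And>z. z \<in> S \<Longrightarrow> p z \<in> S" using pS by blast
  show eq: "S = \<Union>{C\<in>cyc p ` U. C \<subseteq> S}"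
  proof
    show "S \<subseteq> \<Union>{C\<in>cyc p ` U. C \<subseteq> S}"
    proof
      fix x assume x: "x \<in> S"
      have "cyc p x \<in> {C\<in>cyc p ` U. C \<subseteq> S}" using x S cyc_closed[OF cl x] by auto
      thus "x \<in> \<Union>{C\<in>cyc p ` U. C \<subseteq> S}" using cyc_self[of x p] by blast
    qed
  qed blast
  have fin: "\<And>C. C \<in> {C\<in>cyc p ` U. C \<subseteq> S} \<Longrightarrow> finite C"
    using finite_subset[OF S U] finite_subset by blast
  have disj: "pairwise disjnt {C\<in>cyc p ` U. C \<subseteq> S}"
    using orb_disj[OF perm, of U] by (rule pairwise_subset) blast
  have "card S = sum card {C\<in>cyc p ` U. C \<subseteq> S}"
    using card_Union_disjoint[OF disj fin] eq by simp
  also have "\<dots> = (\<Sum>C\<in>cyc p ` U. if C \<subseteq> S then card C else 0)"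
    using U by (simp add: sum.inter_filter)
  finally show "card S = (\<Sum>C\<in>cyc p ` U. if C \<subseteq> S then card C else 0)" .
qed

lemma swap_even:
  assumes U: "finite U" and p: "p permutes U" and AB: "A \<union> B = U" "A \<inter> B = {}"
    and sw: "p ` A = B" "p ` B = A" and C: "C \<in> cyc p ` U"
  shows "even (card C)"
proof -
  have CU: "C \<subseteq> U" using orbit_sub[OF p C] .
  have finC: "finite C" using finite_subset[OF CU U] .
  have inj: "inj p" using permutes_inj[OF p] .
  have sub: "p ` C \<subseteq> C"
  proof
    fix w assume "w \<in> p ` C"
    then obtain z where z: "z \<in> C" "w = p z" by auto
    from C obtain x where x: "C = cyc p x" by auto
    have "p z \<in> cyc p z" by (rule cyc_app)
    moreover have "cyc p z \<subseteq> cyc p x" using cyc_trans z x by simp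
    ultimately show "w \<in> C" using z x by auto
  qed
  have pC: "p ` C = C"
    using card_subset_eq[OF finC sub] card_image[OF inj_on_subset[OF inj subset_UNIV]] by simp
  have "p ` (C \<inter> A) = C \<inter> B" using image_Int[OF inj] pC sw by simp
  hence cAB: "card (C \<inter> B) = card (C \<inter> A)"
    using card_image[OF inj_on_subset[OF inj subset_UNIV]] by metis
  have "C = (C \<inter> A) \<union> (C \<inter> B)" using CU AB by auto
  hence "card C = card (C \<inter> A) + card (C \<inter> B)"
    using card_Un_disjoint[of "C \<inter> A" "C \<inter> B"] finC AB(2) by auto
  thus ?thesis using cAB by simp
qed

lemma ms_pick:
  assumes "finite Ob" "image_mset f (mset_set Ob) = add_mset a M"
  shows "\<exists>x\<in>Ob. f x = a \<and> image_mset f (mset_set (Ob - {x})) = M"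
proof -
  have "a \<in># image_mset f (mset_set Ob)" using assms(2) by simp
  then obtain x where x: "x \<in> Ob" "f x = a" using assms(1) by auto
  have "mset_set Ob = add_mset x (mset_set (Ob - {x}))" using mset_set.remove[OF assms(1) x(1)] .
  hence "add_mset a (image_mset f (mset_set (Ob - {x}))) = add_mset a M" using assms(2) x(2) by simp
  thus ?thesis using x by auto
qed

lemma ms1:
  assumes "finite Ob" "image_mset f (mset_set Ob) = {#a#}"
  shows "\<exists>x. Ob = {x} \<and> f x = a"
proof -
  obtain x where x: "x \<in> Ob" "f x = a" "image_mset f (mset_set (Ob - {x})) = {#}"
    using ms_pick[OF assms(1), of f a "{#}"] assms(2) by blast
  hence "mset_set (Ob - {x}) = {#}" by simp
  hence "Ob - {x} = {}" using assms(1) by (simp add: mset_set_empty_iff)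
  hence "Ob = {x}" using x(1) by blast
  thus ?thesis using x(2) by blast
qed

lemma ms2:
  assumes "finite Ob" "image_mset f (mset_set Ob) = {#a,b#}"
  shows "\<exists>x y. Ob = {x,y} \<and> x \<noteq> y \<and> f x = a \<and> f y = b"
proof -
  obtain x where x: "x \<in> Ob" "f x = a" "image_mset f (mset_set (Ob - {x})) = {#b#}"
    using ms_pick[OF assms(1), of f a "{#b#}"] assms(2) by auto
  then obtain y where y: "Ob - {x} = {y}" "f y = b" using ms1[of "Ob - {x}" f b] assms(1) by auto
  hence "Ob = {x,y}" "x \<noteq> y" using x(1) by auto
  thus ?thesis using x y by auto
qed

lemma ms3:
  assumes "finite Ob" "image_mset f (mset_set Ob) = {#a,b,c#}"
  shows "\<exists>x y z. Ob = {x,y,z} \<and> x \<noteq> y \<and> x \<noteq> z \<and> y \<noteq> z \<and> f x = a \<and> f y = b \<and> f z = c"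
proof -
  obtain x where x: "x \<in> Ob" "f x = a" "image_mset f (mset_set (Ob - {x})) = {#b,c#}"
    using ms_pick[OF assms(1), of f a "{#b,c#}"] assms(2) by auto
  then obtain y z where yz: "Ob - {x} = {y,z}" "y \<noteq> z" "f y = b" "f z = c"
    using ms2[of "Ob - {x}" f b c] assms(1) by auto
  hence "Ob = {x,y,z}" "x \<noteq> y" "x \<noteq> z" using x(1) by auto
  thus ?thesis using x yz by auto
qed




lemma Kclass:
  assumes "H \<in> HH n" "p \<in> H"
  shows "(H = Alt n \<and> evenperm p)
    \<or> (\<exists>S. H = {q\<in>Sym n. q ` S = S} \<and> S \<subseteq> {1..n} \<and> 1 \<le> card S \<and> card S \<le> n div 3 - 1 \<and> p ` S = S)
    \<or> (\<exists>A B. H = {q\<in>Sym n. (q`A = A \<and> q`B = B) \<or> (q`A = B \<and> q`B = A)} \<and> A \<union> B = {1..n} \<and> A \<inter> B = {}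
          \<and> card A = n div 2 \<and> card B = n div 2 \<and> ((p`A = A \<and> p`B = B) \<or> (p`A = B \<and> p`B = A)))"
proof -
  from assms(1) consider "H \<in> Hm1 n" | "H = Alt n" | i where "i \<in> {1..n div 3 - 1}" "H \<in> Hpos n i"
    unfolding HH_def by blast
  then show ?thesis
  proof cases
    case 1
    then obtain A B where H: "H = {q\<in>Sym n. (q`A = A \<and> q`B = B) \<or> (q`A = B \<and> q`B = A)}"
      and c: "A \<union> B = {1..n}" "A \<inter> B = {}" "card A = n div 2" "card B = n div 2"
      unfolding Hm1_def by blast
    have "(p`A = A \<and> p`B = B) \<or> (p`A = B \<and> p`B = A)" using assms(2) H by simp
    hence "\<exists>A B. H = {q\<in>Sym n. (q`A = A \<and> q`B = B) \<or> (q`A = B \<and> q`B = A)} \<and> A \<union> B = {1..n} \<and> A \<inter> B = {}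
          \<and> card A = n div 2 \<and> card B = n div 2 \<and> ((p`A = A \<and> p`B = B) \<or> (p`A = B \<and> p`B = A))"
      using H c by blast
    thus ?thesis by blast
  next
    case 2
    hence "evenperm p" using assms(2) by (simp add: Alt_def)
    thus ?thesis using 2 by blast
  next
    case 3
    then obtain S where H: "H = {q\<in>Sym n. q ` S = S}" and c: "S \<subseteq> {1..n}" "card S = i"
      unfolding Hpos_def by blast
    have "p ` S = S" using assms(2) H by simp
    hence "\<exists>S. H = {q\<in>Sym n. q ` S = S} \<and> S \<subseteq> {1..n} \<and> 1 \<le> card S \<and> card S \<le> n div 3 - 1 \<and> p ` S = S"
      using H c 3(1) by auto
    thus ?thesis by blast
  qed
qed

lemma swap_unique:
  assumes AB: "A \<union> B = U" "A \<inter> B = {}" "p`A = B" "p`B = A"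
    and AB': "A' \<union> B' = U" "A' \<inter> B' = {}" "p`A' = B'" "p`B' = A'"
    and x: "x \<in> A" "x \<in> A'" and cx: "cyc p x = U"
  shows "A = A' \<and> B = B'"
proof -
  have "(p^^k) x \<in> A \<longleftrightarrow> (p^^k) x \<in> A'" for k
  proof (induct k)
    case 0 show ?case using x by simp
  next
    case (Suc k)
    define z where "z = (p^^k) x"
    have zU: "z \<in> U" using cx unfolding cyc_def z_def by blast
    have e: "(p^^Suc k) x = p z" unfolding z_def by simp
    show ?case
    proof (cases "z \<in> A")
      case True
      hence "z \<in> A'" using Suc z_def by simp
      have "p z \<in> B" using True AB(3) by blast
      moreover have "p z \<in> B'" using \<open>z \<in> A'\<close> AB'(3) by blast
      ultimately show ?thesis unfolding e using AB(2) AB'(2) by blast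
    next
      case False
      hence "z \<in> B" "z \<notin> A'" using zU AB(1) Suc z_def by auto
      hence "z \<in> B'" using zU AB'(1) by blast
      have "p z \<in> A" using \<open>z \<in> B\<close> AB(4) by blast
      moreover have "p z \<in> A'" using \<open>z \<in> B'\<close> AB'(4) by blast
      ultimately show ?thesis unfolding e by blast
    qed
  qed
  hence all: "\<forall>y\<in>U. y \<in> A \<longleftrightarrow> y \<in> A'" using cx unfolding cyc_def by auto
  have "A = A'" using all AB(1) AB'(1) by blast
  moreover have "B = B'" using all AB AB' calculation by blast
  ultimately show ?thesis by blast
qed


lemma Kcases:
  assumes "H \<in> HH n" "p \<in> H"
  obtains (Alt) "H = Alt n" "evenperm p"
  | (Set) S where "H = {q\<in>Sym n. q ` S = S}" "S \<subseteq> {1..n}" "1 \<le> card S" "card S \<le> n div 3 - 1" "p ` S = S"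
  | (Pres) A B where "A \<union> B = {1..n}" "A \<inter> B = {}" "card A = n div 2" "card B = n div 2" "p`A = A" "p`B = B"
  | (Swap) A B where "H = {q\<in>Sym n. (q`A = A \<and> q`B = B) \<or> (q`A = B \<and> q`B = A)}" "A \<union> B = {1..n}" "A \<inter> B = {}"
      "card A = n div 2" "card B = n div 2" "p`A = B" "p`B = A"
proof -
  from assms(1) consider "H \<in> Hm1 n" | "H = Alt n" | i where "i \<in> {1..n div 3 - 1}" "H \<in> Hpos n i"
    unfolding HH_def by blast
  then show thesis
  proof cases
    case 1
    then obtain A B where H: "H = {q\<in>Sym n. (q`A = A \<and> q`B = B) \<or> (q`A = B \<and> q`B = A)}"
      and c: "A \<union> B = {1..n}" "A \<inter> B = {}" "card A = n div 2" "card B = n div 2"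
      unfolding Hm1_def by blast
    have "(p`A = A \<and> p`B = B) \<or> (p`A = B \<and> p`B = A)" using assms(2) H by simp
    then show thesis
    proof
      assume "p`A = A \<and> p`B = B"
      hence "p`A = A" "p`B = B" by simp_all
      thus thesis by (rule Pres[OF c])
    next
      assume "p`A = B \<and> p`B = A"
      hence "p`A = B" "p`B = A" by simp_all
      thus thesis by (rule Swap[OF H c])
    qed
  next
    case 2
    hence "evenperm p" using assms(2) by (simp add: Alt_def)
    thus thesis by (rule Alt[OF 2])
  next
    case 3
    then obtain S where H: "H = {q\<in>Sym n. q ` S = S}" and c: "S \<subseteq> {1..n}" "card S = i"
      unfolding Hpos_def by blast
    have pS: "p ` S = S" using assms(2) H by simp
    have "1 \<le> card S" "card S \<le> n div 3 - 1" using c(2) 3(1) by simp_all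
    thus thesis using Set[OF H c(1) _ _ pS] by simp
  qed
qed

lemma G2:
  assumes p: "p \<in> Sym n" and ct: "cycle_type n p = {#a,b#}" and dh: "n div 2 = hh" and dt: "n div 3 - 1 = tt"
    and h1: "odd a \<or> odd b" and h2: "even (Suc a + Suc b)"
    and h3: "tt < a" "tt < b"
    and h4: "a \<noteq> hh" "b \<noteq> hh" "a+b \<noteq> hh" "0 \<noteq> hh"
    and K: "K \<in> HH n" "p \<in> K"
  shows "K = Alt n"
proof -
  let ?U = "{1..n}"
  have fU: "finite ?U" by simp
  have pU: "p permutes ?U" using p by (simp add: Sym_def)
  have fO: "finite (cyc p ` ?U)" by simp
  have "image_mset card (mset_set (cyc p ` ?U)) = {#a,b#}" using ct by (simp add: cycle_type_def)
  from ms2[OF fO this] obtain C1 C2 where O: "cyc p ` ?U = {C1,C2}" "C1 \<noteq> C2" "card C1 = a" "card C2 = b"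
    by (elim exE conjE) blast
  have cg: "card S = (if C1 \<subseteq> S then a else 0) + (if C2 \<subseteq> S then b else 0)"
    if "S \<subseteq> ?U" "p ` S = S" for S
    using inv_card(2)[OF fU pU that] O by simp
  from K show ?thesis
  proof (cases rule: Kcases)
    case Alt thus ?thesis by simp
  next
    case (Set S)
    have "card S = (if C1 \<subseteq> S then a else 0) + (if C2 \<subseteq> S then b else 0)" using cg[OF Set(2,5)] .
    hence False using Set(3,4) h3 dt by (simp split: if_splits)
    thus ?thesis ..
  next
    case (Pres A B)
    have "A \<subseteq> ?U" using Pres(1) by blast
    hence "card A = (if C1 \<subseteq> A then a else 0) + (if C2 \<subseteq> A then b else 0)" using cg[OF _ Pres(5)] by simp
    hence False using Pres(3) h4 dh by (simp split: if_splits)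
    thus ?thesis ..
  next
    case (Swap A B)
    have m1: "C1 \<in> cyc p ` ?U" "C2 \<in> cyc p ` ?U" unfolding O(1) by simp_all
    have "even (card C1)" by (rule swap_even[OF fU pU Swap(2,3,6,7) m1(1)])
    moreover have "even (card C2)" by (rule swap_even[OF fU pU Swap(2,3,6,7) m1(2)])
    ultimately have False using h1 O by simp
    thus ?thesis ..
  qed
qed


lemma G3:
  assumes p: "p \<in> Sym n" and ct: "cycle_type n p = {#a,b,c#}" and dh: "n div 2 = hh" and dt: "n div 3 - 1 = tt"
    and h1: "odd a \<or> odd b \<or> odd c" and h2: "odd (Suc a + Suc b + Suc c)"
    and h3: "1 \<le> a" "a \<le> tt" "tt < b" "tt < c"
    and h4: "a \<noteq> hh" "b \<noteq> hh" "c \<noteq> hh" "a+b \<noteq> hh" "a+c \<noteq> hh"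
      "b+c \<noteq> hh" "a+b+c \<noteq> hh" "0 \<noteq> hh"
    and K: "K \<in> HH n" "p \<in> K" and K': "K' \<in> HH n" "p \<in> K'"
  shows "K = K'"
proof -
  let ?U = "{1..n}"
  have fU: "finite ?U" by simp
  have pU: "p permutes ?U" using p by (simp add: Sym_def)
  have fO: "finite (cyc p ` ?U)" by simp
  have "image_mset card (mset_set (cyc p ` ?U)) = {#a,b,c#}" using ct by (simp add: cycle_type_def)
  from ms3[OF fO this] obtain C1 C2 C3 where O: "cyc p ` ?U = {C1,C2,C3}" "C1 \<noteq> C2" "C1 \<noteq> C3" "C2 \<noteq> C3"
    "card C1 = a" "card C2 = b" "card C3 = c"
    by (elim exE conjE) blast
  have "evenperm p \<longleftrightarrow> even (\<Sum>C\<in>cyc p ` ?U. Suc (card C))" by (rule evenperm_cyc[OF fU pU])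
  also have "(\<Sum>C\<in>cyc p ` ?U. Suc (card C)) = Suc a + Suc b + Suc c" unfolding O(1) using O(2-7) by simp
  finally have odd: "\<not> evenperm p" using h2 by simp
  have cg: "card S = (if C1 \<subseteq> S then a else 0) + (if C2 \<subseteq> S then b else 0) + (if C3 \<subseteq> S then c else 0)"
    if "S \<subseteq> ?U" "p ` S = S" for S
    using inv_card(2)[OF fU pU that] O by simp
  have m1: "C1 \<in> cyc p ` ?U" "C2 \<in> cyc p ` ?U" "C3 \<in> cyc p ` ?U" unfolding O(1) by simp_all
  have key: "K0 = {q\<in>Sym n. q ` C1 = C1}" if K0: "K0 \<in> HH n" "p \<in> K0" for K0
    using K0
  proof (cases rule: Kcases)
    case Alt thus ?thesis using odd by simp
  next
    case (Set S)
    have "card S = (if C1 \<subseteq> S then a else 0) + (if C2 \<subseteq> S then b else 0) + (if C3 \<subseteq> S then c else 0)"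
      using cg[OF Set(2,5)] .
    hence c: "C1 \<subseteq> S" "\<not> C2 \<subseteq> S" "\<not> C3 \<subseteq> S" using Set(3,4) h3 dt by (simp_all split: if_splits)
    have "S = \<Union>{C\<in>cyc p ` ?U. C \<subseteq> S}" using inv_card(1)[OF fU pU Set(2,5)] .
    also have "{C\<in>cyc p ` ?U. C \<subseteq> S} = {C1}" unfolding O(1) using c by auto
    finally have "S = C1" by simp
    thus ?thesis using Set(1) by simp
  next
    case (Pres A B)
    have "A \<subseteq> ?U" using Pres(1) by blast
    hence "card A = (if C1 \<subseteq> A then a else 0) + (if C2 \<subseteq> A then b else 0) + (if C3 \<subseteq> A then c else 0)"
      using cg[OF _ Pres(5)] by simp
    hence False using Pres(3) h4 dh by (simp split: if_splits)
    thus ?thesis ..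
  next
    case (Swap A B)
    have "even (card C1)" by (rule swap_even[OF fU pU Swap(2,3,6,7) m1(1)])
    moreover have "even (card C2)" by (rule swap_even[OF fU pU Swap(2,3,6,7) m1(2)])
    moreover have "even (card C3)" by (rule swap_even[OF fU pU Swap(2,3,6,7) m1(3)])
    ultimately have False using h1 O by simp
    thus ?thesis ..
  qed
  show ?thesis using key[OF K] key[OF K'] by simp
qed

lemma G1:
  assumes p: "p \<in> Sym n" and ct: "cycle_type n p = {#n#}" and dh: "n div 2 = hh" and dt: "n div 3 - 1 = tt"
    and h2: "odd (Suc n)" and h3: "tt < n" and h4: "n \<noteq> hh" "0 \<noteq> hh"
    and K: "K \<in> HH n" "p \<in> K" and K': "K' \<in> HH n" "p \<in> K'"
  shows "K = K'"
proof -
  let ?U = "{1..n}"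
  have fU: "finite ?U" by simp
  have pU: "p permutes ?U" using p by (simp add: Sym_def)
  have fO: "finite (cyc p ` ?U)" by simp
  have "image_mset card (mset_set (cyc p ` ?U)) = {#n#}" using ct by (simp add: cycle_type_def)
  from ms1[OF fO this] obtain C where O: "cyc p ` ?U = {C}" "card C = n"
    by (elim exE conjE) blast
  have "evenperm p \<longleftrightarrow> even (\<Sum>C\<in>cyc p ` ?U. Suc (card C))" by (rule evenperm_cyc[OF fU pU])
  also have "(\<Sum>C\<in>cyc p ` ?U. Suc (card C)) = Suc n" unfolding O(1) using O(2) by simp
  finally have odd: "\<not> evenperm p" using h2 by simp
  have m1: "C \<in> cyc p ` ?U" unfolding O(1) by simp
  have CU: "C \<subseteq> ?U" using orbit_sub[OF pU m1] .
  have "card C = card ?U" using O(2) by simp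
  hence CeqU: "C = ?U" using card_subset_eq[OF fU CU] by simp
  have cg: "card S = (if C \<subseteq> S then n else 0)" if "S \<subseteq> ?U" "p ` S = S" for S
    using inv_card(2)[OF fU pU that] O by simp
  have cycx: "cyc p x = ?U" if "x \<in> ?U" for x
  proof -
    have "cyc p x \<in> cyc p ` ?U" using that by (rule imageI)
    thus ?thesis unfolding O(1) CeqU by simp
  qed
  have swp: "\<exists>A B. K0 = {q\<in>Sym n. (q`A = A \<and> q`B = B) \<or> (q`A = B \<and> q`B = A)} \<and> A \<union> B = ?U \<and> A \<inter> B = {}
          \<and> card A = n div 2 \<and> p`A = B \<and> p`B = A" if K0: "K0 \<in> HH n" "p \<in> K0" for K0
    using K0
  proof (cases rule: Kcases)
    case Alt thus ?thesis using odd by simp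
  next
    case (Set S)
    have "card S = (if C \<subseteq> S then n else 0)" using cg[OF Set(2,5)] .
    hence False using Set(3,4) h3 dt by (simp split: if_splits)
    thus ?thesis ..
  next
    case (Pres A B)
    have "A \<subseteq> ?U" using Pres(1) by blast
    hence "card A = (if C \<subseteq> A then n else 0)" using cg[OF _ Pres(5)] by simp
    hence False using Pres(3) h4 dh by (simp split: if_splits)
    thus ?thesis ..
  next
    case (Swap A B)
    show ?thesis
      apply (rule exI[of _ A], rule exI[of _ B])
      using Swap by simp
  qed
  from swp[OF K] obtain A B where H: "K = {q\<in>Sym n. (q`A = A \<and> q`B = B) \<or> (q`A = B \<and> q`B = A)}"
    and AB: "A \<union> B = ?U" "A \<inter> B = {}" "card A = n div 2" "p`A = B" "p`B = A"
    by (elim exE conjE) blast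
  from swp[OF K'] obtain A' B' where H': "K' = {q\<in>Sym n. (q`A' = A' \<and> q`B' = B') \<or> (q`A' = B' \<and> q`B' = A')}"
    and AB': "A' \<union> B' = ?U" "A' \<inter> B' = {}" "card A' = n div 2" "p`A' = B'" "p`B' = A'"
    by (elim exE conjE) blast
  have "A \<noteq> {}" using AB(3) h4(2) dh by auto
  then obtain x where x: "x \<in> A" by blast
  have xU: "x \<in> ?U" using x AB(1) by blast
  show ?thesis
  proof (cases "x \<in> A'")
    case True
    have "A = A' \<and> B = B'" using swap_unique[OF AB(1,2,4,5) AB'(1,2,4,5) x True cycx[OF xU]] .
    thus ?thesis using H H' by simp
  next
    case False
    hence xB: "x \<in> B'" using xU AB'(1) by blast
    have u: "B' \<union> A' = ?U" "B' \<inter> A' = {}" using AB'(1,2) by blast+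
    have "A = B' \<and> B = A'" using swap_unique[OF AB(1,2,4,5) u AB'(5,4) x xB cycx[OF xU]] .
    hence "A = B'" "B = A'" by simp_all
    thus ?thesis using H H' by blast
  qed
qed


lemma oddI2: "x = 2*r+1 \<Longrightarrow> odd (x::nat)" by simp
lemma evenI2: "x = 2*r \<Longrightarrow> even (x::nat)" by simp

theorem lemma3p7:
  fixes n :: nat and H H' :: "(nat \<Rightarrow> nat) set"
  assumes "n > 30" and "n mod 6 = 0"
    and "H \<in> HH n" and "H' \<in> HH n" and "H \<noteq> H'"
  shows "PP n \<inter> H \<inter> H' = {}"
proof (rule ccontr)
  assume "PP n \<inter> H \<inter> H' \<noteq> {}"
  then obtain p where pP: "p \<in> PP n" and pH: "p \<in> H" and pH': "p \<in> H'" by blast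
  obtain k where nk: "n = 6*k" using assms(2) by (metis mod_eq_0_iff_dvd dvdE)
  have k6: "k \<ge> 6" using assms(1) nk by arith
  have nd2: "n div 2 = 3*k" and nd3: "n div 3 = 2*k" using nk by simp_all
  have nz: "0 \<noteq> 3*k" using k6 by simp
  have nd3': "n div 3 - 1 = 2*k - 1" using nd3 by simp
  have "H = H'"
  proof -
    from pP consider "p \<in> Pm1 n" | "p \<in> P0 n" | "p \<in> P1 n" | i where "i \<in> {2..n div 3 - 1}" "p \<in> Pi_i n i"
      unfolding PP_def by blast
    then show ?thesis
    proof cases
      case 1
      hence p: "p \<in> Sym n" "cycle_type n p = {#n#}" unfolding Pm1_def by simp_all
      have h2: "odd (Suc n)" by (rule oddI2[of _ "3*k"]) (use nk in arith)
      show ?thesis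
        by (rule G1[OF p nd2 nd3' h2 _ _ nz assms(3) pH assms(4) pH']) (use nk k6 in arith)+
    next
      case 2
      hence p: "p \<in> Sym n" and ct: "cycle_type n p = (if even (n div 2) then {#n div 2 - 1, n div 2 + 1#} else {#n div 2 - 2, n div 2 + 2#})"
        unfolding P0_def by simp_all
      show ?thesis
      proof (cases "even (3*k)")
        case True
        then obtain r where r: "3*k = 2*r" by (blast elim: evenE)
        have ct': "cycle_type n p = {#3*k - 1, 3*k + 1#}" using ct True unfolding nd2 by simp
        have h1: "odd (3*k - 1) \<or> odd (3*k+1)" by (rule disjI1, rule oddI2[of _ "r - 1"]) (use r k6 in arith)
        have h2: "even (Suc (3*k - 1) + Suc (3*k+1))" by (rule evenI2[of _ "3*k+1"]) (use k6 in arith)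
        have "H = Alt n" by (rule G2[OF p ct' nd2 nd3' h1 h2 _ _ _ _ _ nz assms(3) pH]) (use nk k6 in arith)+
        moreover have "H' = Alt n" by (rule G2[OF p ct' nd2 nd3' h1 h2 _ _ _ _ _ nz assms(4) pH']) (use nk k6 in arith)+
        ultimately show ?thesis by simp
      next
        case False
        then obtain r where r: "3*k = 2*r+1" by (blast elim: oddE)
        have ct': "cycle_type n p = {#3*k - 2, 3*k + 2#}" using ct False unfolding nd2 by simp
        have h1: "odd (3*k - 2) \<or> odd (3*k+2)" by (rule disjI1, rule oddI2[of _ "r - 1"]) (use r k6 in arith)
        have h2: "even (Suc (3*k - 2) + Suc (3*k+2))" by (rule evenI2[of _ "3*k+1"]) (use k6 in arith)
        have "H = Alt n" by (rule G2[OF p ct' nd2 nd3' h1 h2 _ _ _ _ _ nz assms(3) pH]) (use nk k6 in arith)+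
        moreover have "H' = Alt n" by (rule G2[OF p ct' nd2 nd3' h1 h2 _ _ _ _ _ nz assms(4) pH']) (use nk k6 in arith)+
        ultimately show ?thesis by simp
      qed
    next
      case 3
      hence p: "p \<in> Sym n" and ct: "cycle_type n p = {#1, n div 2 - 2, n div 2 + 1#}" unfolding P1_def by simp_all
      have ct': "cycle_type n p = {#1, 3*k - 2, 3*k + 1#}" using ct unfolding nd2 .
      have h1: "odd 1 \<or> odd (3*k - 2) \<or> odd (3*k + 1)" by simp
      have h2: "odd (Suc 1 + Suc (3*k - 2) + Suc (3*k + 1))" by (rule oddI2[of _ "3*k+1"]) (use k6 in arith)
      show ?thesis
        by (rule G3[OF p ct' nd2 nd3' h1 h2 _ _ _ _ _ _ _ _ _ _ _ nz assms(3) pH assms(4) pH']) (use nk k6 in arith)+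
    next
      case 4
      hence i: "2 \<le> i" "i \<le> 2*k - 1" using nd3 by simp_all
      from 4(2) have p: "p \<in> Sym n" unfolding Pi_i_def by simp
      from 4(2) consider
          (a) "odd i" "3 \<le> i" "cycle_type n p = {#i, (n - i - 1) div 2, (n - i + 1) div 2#}"
        | (b) "even i" "2 \<le> i" "odd ((n - i) div 2)" "cycle_type n p = {#i, (n - i) div 2, (n - i) div 2#}"
        | (c) "even i" "4 \<le> i" "even ((n - i) div 2)" "cycle_type n p = {#i, (n - i) div 2 - 1, (n - i) div 2 + 1#}"
        | (d) "i = 2" "even ((n - 2) div 2)" "cycle_type n p = {#2, n div 2 - 4, n div 2 + 2#}"
        unfolding Pi_i_def by blast
      then show ?thesis
      proof cases
        case a
        then obtain j where j: "i = 2*j+1" by (blast elim: oddE)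
        have "n - i - 1 = 2*(3*k-j-1)" using nk j i by arith
        hence e1: "(n - i - 1) div 2 = 3*k-j-1" by simp
        have "n - i + 1 = 2*(3*k-j)" using nk j i by arith
        hence e2: "(n - i + 1) div 2 = 3*k-j" by simp
        have ct': "cycle_type n p = {#i, 3*k-j-1, 3*k-j#}" using a(3) unfolding e1 e2 .
        have h1: "odd i \<or> odd (3*k-j-1) \<or> odd (3*k-j)" using a(1) by simp
        have h2: "odd (Suc i + Suc (3*k-j-1) + Suc (3*k-j))" by (rule oddI2[of _ "3*k+1"]) (use j i k6 in arith)
        show ?thesis
          by (rule G3[OF p ct' nd2 nd3' h1 h2 _ _ _ _ _ _ _ _ _ _ _ nz assms(3) pH assms(4) pH']) (use nk k6 nd2 nd3 j i in arith)+
      next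
        case b
        then obtain j where j: "i = 2*j" by (blast elim: evenE)
        have "n - i = 2*(3*k-j)" using nk j i by arith
        hence e1: "(n - i) div 2 = 3*k-j" by simp
        have ct': "cycle_type n p = {#i, 3*k-j, 3*k-j#}" using b(4) unfolding e1 .
        have h1: "odd i \<or> odd (3*k-j) \<or> odd (3*k-j)" using b(3) unfolding e1 by simp
        have h2: "odd (Suc i + Suc (3*k-j) + Suc (3*k-j))" by (rule oddI2[of _ "3*k+1"]) (use j i k6 in arith)
        show ?thesis
          by (rule G3[OF p ct' nd2 nd3' h1 h2 _ _ _ _ _ _ _ _ _ _ _ nz assms(3) pH assms(4) pH']) (use nk k6 nd2 nd3 j i in arith)+
      next
        case c
        then obtain j where j: "i = 2*j" by (blast elim: evenE)
        have "n - i = 2*(3*k-j)" using nk j i by arith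
        hence e1: "(n - i) div 2 = 3*k-j" by simp
        have ct': "cycle_type n p = {#i, 3*k-j-1, 3*k-j+1#}" using c(4) unfolding e1 .
        from c(3) obtain r where r: "3*k-j = 2*r" unfolding e1 by (blast elim: evenE)
        have h1: "odd i \<or> odd (3*k-j-1) \<or> odd (3*k-j+1)"
          by (rule disjI2, rule disjI1, rule oddI2[of _ "r - 1"]) (use r j i k6 in arith)
        have h2: "odd (Suc i + Suc (3*k-j-1) + Suc (3*k-j+1))" by (rule oddI2[of _ "3*k+1"]) (use j i k6 in arith)
        show ?thesis
          by (rule G3[OF p ct' nd2 nd3' h1 h2 _ _ _ _ _ _ _ _ _ _ _ nz assms(3) pH assms(4) pH']) (use nk k6 nd2 nd3 j i c(2) in arith)+
      next
        case d
        have "n - 2 = 2*(3*k-1)" using nk k6 by arith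
        hence e1: "(n - 2) div 2 = 3*k-1" by simp
        have ct': "cycle_type n p = {#2, 3*k-4, 3*k+2#}" using d(3) unfolding nd2 .
        from d(2) obtain r where r: "3*k-1 = 2*r" unfolding e1 by (blast elim: evenE)
        have h1: "odd 2 \<or> odd (3*k-4) \<or> odd (3*k+2)"
          by (rule disjI2, rule disjI1, rule oddI2[of _ "r - 2"]) (use r k6 in arith)
        have h2: "odd (Suc 2 + Suc (3*k-4) + Suc (3*k+2))" by (rule oddI2[of _ "3*k+1"]) (use k6 in arith)
        show ?thesis
          by (rule G3[OF p ct' nd2 nd3' h1 h2 _ _ _ _ _ _ _ _ _ _ _ nz assms(3) pH assms(4) pH']) (use nk k6 in arith)+
      qed
    qed
  qed
  thus False using assms(5) by simp
qed


end
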